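(* With $X_n,Y_n$ as below, let $M_{a,b}(n)=E[X_n^{a}Y_n^{b}]$. Then for all integers $r,s\ge 1$: $$\lim_{n\to\infty}M_{2r,2s}(n)=\frac{(2r)!}{2^r r!}\cdot\frac{(2s)!}{2^s s!},\qquad \lim_{n\to\infty}M_{2r-1,2s-1}(n)=0,$$ and moreover $M_{2r,2s-1}(n)=0$ and $M_{2r-1,2s}(n)=0$ for every $n$.
   Context: For a permutation $\pi=\pi_1\cdots\pi_n$ of $\{1,\dots,n\}$: $\mathrm{inv}(\pi)$ is the number of pairs $1\le i<j\le n$ with $\pi_i>\pi_j$, and $\mathrm{maj}(\pi)$ is the sum of all positions $i\in\{1,\dots,n-1\}$ with $\pi_i>\pi_{i+1}$. For $\pi$ uniformly random in $S_n$ ($n\ge2$), $X_n=(\mathrm{inv}(\pi)-m_n)/\sigma_n$ and $Y_n=(\mathrm{maj}(\pi)-m_n)/\sigma_n$, where $m_n=n(n-1)/4$ and $\sigma_n^2=(2n^3+3n^2-5n)/72$. *)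

theory Defs
  imports "HOL-Analysis.Analysis" "HOL-Combinatorics.Permutations"
begin

definition inv_stat :: "nat \<Rightarrow> (nat \<Rightarrow> nat) \<Rightarrow> nat" where
  "inv_stat n p = card {(i, j). 1 \<le> i \<and> i < j \<and> j \<le> n \<and> p i > p j}"

definition maj_stat :: "nat \<Rightarrow> (nat \<Rightarrow> nat) \<Rightarrow> nat" where
  "maj_stat n p = (\<Sum>i \<in> {i. 1 \<le> i \<and> i \<le> n - 1 \<and> p i > p (Suc i)}. i)"

definition mean_n :: "nat \<Rightarrow> real" where
  "mean_n n = real n * (real n - 1) / 4"

definition sigma_n :: "nat \<Rightarrow> real" where
  "sigma_n n = sqrt ((2 * real n ^ 3 + 3 * real n ^ 2 - 5 * real n) / 72)"

definition X_n :: "nat \<Rightarrow> (nat \<Rightarrow> nat) \<Rightarrow> real" where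
  "X_n n p = (real (inv_stat n p) - mean_n n) / sigma_n n"

definition Y_n :: "nat \<Rightarrow> (nat \<Rightarrow> nat) \<Rightarrow> real" where
  "Y_n n p = (real (maj_stat n p) - mean_n n) / sigma_n n"

definition M_mom :: "nat \<Rightarrow> nat \<Rightarrow> nat \<Rightarrow> real" where
  "M_mom a b n = (\<Sum>p \<in> {p. p permutes {1..n}}. X_n n p ^ a * Y_n n p ^ b)
                 / real (card {p. p permutes {1..n}})"

end

theory Submission
  imports Defs "HOL-Real_Asymp.Real_Asymp"
begin

definition PS :: "nat \<Rightarrow> (nat \<Rightarrow> nat) set" where "PS n = {p. p permutes {1..n}}"

lemma finite_PS: "finite (PS n)"
  unfolding PS_def by (rule finite_permutations) simp

lemma card_PS: "card (PS n) = fact n"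
  unfolding PS_def by (rule card_permutations) auto

lemma perm_range: "w permutes {1..N} \<Longrightarrow> 1 \<le> i \<Longrightarrow> i \<le> N \<Longrightarrow> 1 \<le> w i \<and> w i \<le> N"
  using permutes_in_image[of w "{1..N}" i] by auto

lemma perm_out: "w permutes {1..N} \<Longrightarrow> i \<notin> {1..N} \<Longrightarrow> w i = i"
  by (simp add: permutes_not_in)

lemma perm_inj: "w permutes {1..N} \<Longrightarrow> w i = w j \<Longrightarrow> i = j"
  using permutes_inj by (metis injD)

definition ins :: "nat \<Rightarrow> nat \<Rightarrow> (nat \<Rightarrow> nat) \<Rightarrow> nat \<Rightarrow> nat" where
  "ins N s w i = (if i \<le> s then w i else if i = Suc s then Suc N else if i \<le> Suc N then w (i - 1) else i)"

lemma ins_val: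
  assumes w: "w permutes {1..N}" and s: "s \<le> N" and i: "1 \<le> i" "i \<le> Suc N" "i \<noteq> Suc s"
  shows "1 \<le> ins N s w i \<and> ins N s w i \<le> N"
proof (cases "i \<le> s")
  case True then show ?thesis using perm_range[OF w, of i] i s by (simp add: ins_def)
next
  case False
  then have "1 \<le> i - 1" "i - 1 \<le> N" using i by auto
  then show ?thesis using perm_range[OF w, of "i - 1"] i s False by (simp add: ins_def)
qed

lemma ins_val_inj:
  assumes w: "w permutes {1..N}" and s: "s \<le> N" and i: "i \<noteq> Suc s" "1 \<le> i" and j: "j \<noteq> Suc s" "1 \<le> j"
   and ij: "i \<le> Suc N" "j \<le> Suc N" and e: "ins N s w i = ins N s w j"
  shows "i = j"
proof -
  define f where "f i = (if i \<le> s then i else i - 1)" for i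
  have "ins N s w i = w (f i)" "ins N s w j = w (f j)" using i j ij by (auto simp: ins_def f_def)
  then have "f i = f j" using e perm_inj[OF w] by metis
  then show ?thesis using i j by (auto simp: f_def split: if_splits)
qed

lemma ins_permutes:
  assumes w: "w permutes {1..N}" and s: "s \<le> N"
  shows "ins N s w permutes {1..Suc N}"
proof (rule bij_imp_permutes)
  let ?q = "ins N s w"
  have inj: "inj_on ?q {1..Suc N}"
  proof (rule inj_onI)
    fix i j assume i: "i \<in> {1..Suc N}" and j: "j \<in> {1..Suc N}" and e: "?q i = ?q j"
    have qs: "?q (Suc s) = Suc N" by (simp add: ins_def)
    show "i = j"
    proof (cases "i = Suc s \<or> j = Suc s")
      case True
      then show ?thesis using e i j s ins_val[OF w s, of i] ins_val[OF w s, of j] qs by force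
    next
      case False
      then show ?thesis using e i j ins_val_inj[OF w s, of i j] by auto
    qed
  qed
  have sub: "?q ` {1..Suc N} \<subseteq> {1..Suc N}"
  proof
    fix y assume "y \<in> ?q ` {1..Suc N}"
    then obtain i where i: "i \<in> {1..Suc N}" and y: "y = ?q i" by auto
    show "y \<in> {1..Suc N}" using i y s ins_val[OF w s, of i]
      by (cases "i = Suc s") (auto simp: ins_def)
  qed
  show "bij_betw ?q {1..Suc N} {1..Suc N}"
    using inj endo_inj_surj[OF _ sub inj] by (simp add: bij_betw_def)
next
  fix x assume "x \<notin> {1..Suc N}"
  then show "ins N s w x = x" using perm_out[OF w, of 0] perm_out[OF w, of x] s by (auto simp: ins_def)
qed

lemma ins_inj:
  assumes w: "w permutes {1..N}" and s: "s \<le> N" and w': "w' permutes {1..N}" and s': "s' \<le> N"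
    and e: "ins N s w = ins N s' w'"
  shows "s = s' \<and> w = w'"
proof -
  have val: "\<And>w s i. w permutes {1..N} \<Longrightarrow> s \<le> N \<Longrightarrow> i \<le> Suc N \<Longrightarrow> ins N s w i = Suc N \<longleftrightarrow> i = Suc s"
  proof -
    fix w s i assume w: "w permutes {1..N}" and s: "s \<le> N" and i: "i \<le> Suc N"
    show "ins N s w i = Suc N \<longleftrightarrow> i = Suc s"
    proof (cases "i = 0")
      case True then show ?thesis using perm_out[OF w, of 0] by (simp add: ins_def)
    next
      case False then show ?thesis using ins_val[OF w s, of i] i by (auto simp: ins_def)
    qed
  qed
  have "ins N s' w' (Suc s) = Suc N" using e val[OF w s, of "Suc s"] s by simp
  then have ss: "s = s'" using val[OF w' s', of "Suc s"] s by simp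
  have "w i = w' i" for i
  proof -
    consider "i \<le> s" | "s < i" "i \<le> N" | "N < i" by linarith
    then show ?thesis
    proof cases
      case 1 then show ?thesis using fun_cong[OF e, of i] ss by (simp add: ins_def)
    next
      case 2 then show ?thesis using fun_cong[OF e, of "Suc i"] ss by (simp add: ins_def)
    next
      case 3 then show ?thesis using perm_out[OF w, of i] perm_out[OF w', of i] by simp
    qed
  qed
  then show ?thesis using ss by auto
qed

lemma sum_PS_Suc:
  fixes F :: "(nat \<Rightarrow> nat) \<Rightarrow> 'a::comm_monoid_add"
  shows "(\<Sum>q\<in>PS (Suc N). F q) = (\<Sum>w\<in>PS N. \<Sum>s\<le>N. F (ins N s w))"
proof -
  let ?g = "\<lambda>(w, s). ins N s w"
  let ?A = "PS N \<times> {..N}"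
  have inj: "inj_on ?g ?A"
  proof (rule inj_onI)
    fix x y assume "x \<in> ?A" "y \<in> ?A" "?g x = ?g y"
    then show "x = y" using ins_inj[of "fst x" N "snd x" "fst y" "snd y"]
      by (auto simp: PS_def case_prod_beta prod_eq_iff)
  qed
  have sub: "?g ` ?A \<subseteq> PS (Suc N)"
    using ins_permutes by (auto simp: PS_def)
  have "card (?g ` ?A) = card (PS (Suc N))"
    using card_image[OF inj] by (simp add: card_cartesian_product card_PS)
  then have img: "?g ` ?A = PS (Suc N)"
    using card_subset_eq[OF finite_PS sub] by simp
  have "(\<Sum>q\<in>PS (Suc N). F q) = (\<Sum>x\<in>?A. F (?g x))"
    unfolding img[symmetric] by (rule sum.reindex[OF inj, unfolded comp_def])
  also have "\<dots> = (\<Sum>w\<in>PS N. \<Sum>s\<le>N. F (ins N s w))"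
    by (simp add: sum.cartesian_product case_prod_beta')
  finally show ?thesis .
qed

definition Inv :: "nat \<Rightarrow> (nat \<Rightarrow> nat) \<Rightarrow> (nat \<times> nat) set" where
  "Inv n p = {(i, j). 1 \<le> i \<and> i < j \<and> j \<le> n \<and> p i > p j}"

lemma inv_stat_Inv: "inv_stat n p = card (Inv n p)"
  by (simp add: inv_stat_def Inv_def)

lemma finite_Inv: "finite (Inv n p)"
  by (rule finite_subset[of _ "{1..n} \<times> {1..n}"]) (auto simp: Inv_def)

lemma inv_ins:
  assumes w: "\<And>i. 1 \<le> i \<Longrightarrow> i \<le> N \<Longrightarrow> w i \<le> N" and s: "s \<le> N"
  shows "inv_stat (Suc N) (ins N s w) = inv_stat N w + (N - s)"
proof -
  let ?q = "ins N s w"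
  define e where "e i = (if i \<le> s then i else Suc i)" for i
  define e' where "e' i = (if i \<le> s then i else i - 1)" for i
  let ?E = "\<lambda>(i, j). (e i, e j)"
  let ?B = "(\<lambda>j. (Suc s, j)) ` {Suc (Suc s)..Suc N}"
  have qe: "?q (e i) = w i" if "i \<le> N" for i
    using that by (auto simp: ins_def e_def)
  have emono: "e i < e j \<longleftrightarrow> i < j" for i j by (auto simp: e_def)
  have ee': "e (e' i) = i" if "i \<noteq> Suc s" for i using that by (auto simp: e_def e'_def)
  have qle: "?q i \<le> N" if "1 \<le> i" "i \<le> Suc N" "i \<noteq> Suc s" for i
  proof (cases "i \<le> s")
    case True then show ?thesis using w[of i] that s by (simp add: ins_def)
  next
    case False
    then show ?thesis using w[of "i - 1"] that s by (simp add: ins_def)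
  qed
  have eq: "Inv (Suc N) ?q = ?E ` Inv N w \<union> ?B"
  proof (intro equalityI subsetI)
    fix x assume x: "x \<in> Inv (Suc N) ?q"
    obtain i j where ij: "x = (i, j)" by force
    have ij': "1 \<le> i" "i < j" "j \<le> Suc N" "?q i > ?q j" using x ij by (auto simp: Inv_def)
    have jn: "j \<noteq> Suc s"
    proof
      assume "j = Suc s"
      then have "?q j = Suc N" by (simp add: ins_def)
      moreover have "?q i \<le> N" using qle[of i] ij' \<open>j = Suc s\<close> by simp
      ultimately show False using ij' by simp
    qed
    show "x \<in> ?E ` Inv N w \<union> ?B"
    proof (cases "i = Suc s")
      case True then show ?thesis using ij ij' by auto
    next
      case False
      have "1 \<le> e' i" using ij' False by (auto simp: e'_def)
      have "e' i \<le> N" "e' j \<le> N" using ij' False jn s by (auto simp: e'_def)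
      then have "(e' i, e' j) \<in> Inv N w"
        using ij' False \<open>1 \<le> e' i\<close> qe[of "e' i"] qe[of "e' j"] ee'[OF False] ee'[OF jn] emono[of "e' i" "e' j"]
        by (auto simp: Inv_def)
      moreover have "x = ?E (e' i, e' j)" using ij ee'[OF False] ee'[OF jn] by simp
      ultimately show ?thesis by blast
    qed
  next
    fix x assume "x \<in> ?E ` Inv N w \<union> ?B"
    then show "x \<in> Inv (Suc N) ?q"
    proof
      assume "x \<in> ?E ` Inv N w"
      then obtain i j where "(i, j) \<in> Inv N w" "x = (e i, e j)" by auto
      then show ?thesis using qe[of i] qe[of j] emono[of i j] by (auto simp: Inv_def e_def)
    next
      assume "x \<in> ?B"
      then obtain j where j: "Suc (Suc s) \<le> j" "j \<le> Suc N" "x = (Suc s, j)" by auto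
      have "?q j \<le> N" using qle[of j] j by simp
      moreover have "?q (Suc s) = Suc N" by (simp add: ins_def)
      ultimately show ?thesis using j by (auto simp: Inv_def)
    qed
  qed
  have injE: "inj_on ?E (Inv N w)"
    by (rule inj_onI) (auto simp: e_def split: if_splits)
  have disj: "?E ` Inv N w \<inter> ?B = {}"
    by (auto simp: e_def split: if_splits)
  have "card (Inv (Suc N) ?q) = card (?E ` Inv N w) + card ?B"
    unfolding eq by (rule card_Un_disjoint) (auto simp: finite_Inv disj)
  also have "card (?E ` Inv N w) = card (Inv N w)" by (rule card_image[OF injE])
  also have "card ?B = N - s" by (subst card_image) (auto simp: inj_on_def)
  finally show ?thesis by (simp add: inv_stat_Inv)
qed

definition DS :: "nat \<Rightarrow> (nat \<Rightarrow> nat) \<Rightarrow> nat set" where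
  "DS n p = {i. 1 \<le> i \<and> i \<le> n - 1 \<and> p i > p (Suc i)}"

lemma maj_stat_DS: "maj_stat n p = \<Sum>(DS n p)"
  by (simp add: maj_stat_def DS_def)

lemma finite_DS: "finite (DS n p)"
  by (rule finite_subset[of _ "{1..n}"]) (auto simp: DS_def)

definition bb :: "nat \<Rightarrow> nat \<Rightarrow> (nat \<Rightarrow> nat) \<Rightarrow> nat" where
  "bb N s w = (if s < N then Suc s else 0) + card {i \<in> DS N w. s < i} - (if s \<in> DS N w then s else 0)"

lemma sum_Suc_lemma: "finite U \<Longrightarrow> sum Suc U = \<Sum>U + card U"
  by (induction U rule: finite_induct) auto

lemma maj_ins:
  assumes w: "\<And>i. 1 \<le> i \<Longrightarrow> i \<le> N \<Longrightarrow> w i \<le> N" and s: "s \<le> N"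
  shows "maj_stat (Suc N) (ins N s w) = maj_stat N w + bb N s w"
proof -
  let ?q = "ins N s w"
  let ?D = "DS N w"
  define L where "L = {i \<in> ?D. i < s}"
  define U where "U = {i \<in> ?D. s < i}"
  define Ms where "Ms = (if s < N then {Suc s} else {})"
  have eq: "DS (Suc N) ?q = L \<union> Ms \<union> Suc ` U"
  proof (intro equalityI subsetI)
    fix i assume i: "i \<in> DS (Suc N) ?q"
    then have i1: "1 \<le> i" "i \<le> N" "?q i > ?q (Suc i)" by (auto simp: DS_def)
    consider "i < s" | "i = s" | "i = Suc s" | "Suc s < i" by linarith
    then show "i \<in> L \<union> Ms \<union> Suc ` U"
    proof cases
      case 1 then show ?thesis using i1 s by (auto simp: L_def DS_def ins_def)
    next
      case 2 then show ?thesis using i1 w[of s] by (auto simp: ins_def)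
    next
      case 3 then show ?thesis using i1 by (auto simp: Ms_def)
    next
      case 4
      then have "i - 1 \<in> U" using i1 by (auto simp: U_def DS_def ins_def)
      moreover have "i = Suc (i - 1)" using 4 by simp
      ultimately show ?thesis by blast
    qed
  next
    fix i assume "i \<in> L \<union> Ms \<union> Suc ` U"
    then consider "i \<in> L" | "i \<in> Ms" | "i \<in> Suc ` U" by blast
    then show "i \<in> DS (Suc N) ?q"
    proof cases
      case 1 then show ?thesis by (auto simp: L_def DS_def ins_def)
    next
      case 2
      then have "i = Suc s" "s < N" by (auto simp: Ms_def split: if_splits)
      then show ?thesis using w[of "Suc s"] by (auto simp: DS_def ins_def)
    next
      case 3
      then obtain j where "j \<in> U" "i = Suc j" by auto
      then show ?thesis by (auto simp: U_def DS_def ins_def)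
    qed
  qed
  have fin: "finite L" "finite U" "finite Ms" using finite_DS by (auto simp: L_def U_def Ms_def)
  have "\<Sum>(DS (Suc N) ?q) = \<Sum>L + \<Sum>Ms + \<Sum>(Suc ` U)"
    unfolding eq using fin
    by (subst sum.union_disjoint, auto simp: L_def U_def Ms_def sum.union_disjoint)+
  also have "\<Sum>(Suc ` U) = \<Sum>U + card U"
    by (subst sum.reindex) (use fin in \<open>auto simp: sum_Suc_lemma\<close>)
  also have "\<Sum>Ms = (if s < N then Suc s else 0)" by (simp add: Ms_def)
  finally have A: "maj_stat (Suc N) ?q = \<Sum>L + (if s < N then Suc s else 0) + \<Sum>U + card U"
    by (simp add: maj_stat_DS)
  have D: "?D = L \<union> (?D \<inter> {s}) \<union> U" by (auto simp: L_def U_def)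
  have "\<Sum>?D = \<Sum>L + \<Sum>(?D \<inter> {s}) + \<Sum>U"
    apply (subst D) using fin
    by (subst sum.union_disjoint, auto simp: L_def U_def sum.union_disjoint)+
  also have "\<Sum>(?D \<inter> {s}) = (if s \<in> ?D then s else 0)" by auto
  finally have B: "maj_stat N w = \<Sum>L + (if s \<in> ?D then s else 0) + \<Sum>U" by (simp add: maj_stat_DS)
  have "s \<in> ?D \<Longrightarrow> s < N" by (auto simp: DS_def)
  then show ?thesis using A B by (auto simp: bb_def U_def)
qed

definition cmp :: "nat \<Rightarrow> (nat \<Rightarrow> nat) \<Rightarrow> nat \<Rightarrow> nat" where
  "cmp N w i = (if 1 \<le> i \<and> i \<le> N then Suc N - w i else i)"

lemma comp_permutes:
  assumes w: "w permutes {1..N}" shows "cmp N w permutes {1..N}"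
proof (rule bij_imp_permutes)
  have inj: "inj_on (cmp N w) {1..N}"
  proof (rule inj_onI)
    fix i j assume "i \<in> {1..N}" "j \<in> {1..N}" "cmp N w i = cmp N w j"
    then show "i = j" using perm_range[OF w, of i] perm_range[OF w, of j] perm_inj[OF w, of i j]
      by (auto simp: cmp_def)
  qed
  have sub: "cmp N w ` {1..N} \<subseteq> {1..N}"
  proof
    fix y assume "y \<in> cmp N w ` {1..N}"
    then obtain i where "i \<in> {1..N}" "y = cmp N w i" by auto
    then show "y \<in> {1..N}" using perm_range[OF w, of i] by (auto simp: cmp_def)
  qed
  show "bij_betw (cmp N w) {1..N} {1..N}"
    using inj endo_inj_surj[OF _ sub inj] by (simp add: bij_betw_def)
qed (auto simp: cmp_def)

lemma comp_comp: assumes w: "w permutes {1..N}" shows "cmp N (cmp N w) = w"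
proof
  fix i show "cmp N (cmp N w) i = w i"
    using perm_range[OF w, of i] perm_out[OF w, of i] by (auto simp: cmp_def)
qed

lemma sum_PS_comp:
  fixes F :: "(nat \<Rightarrow> nat) \<Rightarrow> 'a::comm_monoid_add"
  shows "(\<Sum>w\<in>PS N. F (cmp N w)) = (\<Sum>w\<in>PS N. F w)"
  by (rule sum.reindex_bij_witness[where i="cmp N" and j="cmp N"])
     (auto simp: PS_def comp_comp[simplified] comp_permutes[simplified])

lemma cmp_less:
  assumes w: "w permutes {1..N}" and "1 \<le> i" "i \<le> N" "1 \<le> j" "j \<le> N"
  shows "cmp N w j < cmp N w i \<longleftrightarrow> w i < w j"
proof -
  have "w i \<le> N" "w j \<le> N" using perm_range[OF w, of i] perm_range[OF w, of j] assms by auto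
  then show ?thesis using assms by (simp add: cmp_def) linarith
qed

definition Pairs :: "nat \<Rightarrow> (nat \<times> nat) set" where
  "Pairs N = {(i, j). 1 \<le> i \<and> i < j \<and> j \<le> N}"

lemma finite_Pairs: "finite (Pairs N)"
proof -
  have "Pairs N \<subseteq> {1..N} \<times> {1..N}" by (auto simp: Pairs_def)
  then show ?thesis by (rule finite_subset) simp
qed

lemma card_Pairs: "2 * card (Pairs N) = N * (N - 1)"
proof (induction N)
  case 0
  have "Pairs 0 = {}" by (auto simp: Pairs_def)
  then show ?case by simp
next
  case (Suc N)
  have eq: "Pairs (Suc N) = Pairs N \<union> (\<lambda>i. (i, Suc N)) ` {1..N}"
    by (auto simp: Pairs_def)
  have "card (Pairs (Suc N)) = card (Pairs N) + card ((\<lambda>i. (i, Suc N)) ` {1..N})"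
    unfolding eq by (rule card_Un_disjoint[OF finite_Pairs]) (auto simp: Pairs_def)
  also have "card ((\<lambda>i. (i, Suc N)) ` {1..N}) = N" by (subst card_image) (auto simp: inj_on_def)
  finally show ?case using Suc by (cases N) (auto simp: algebra_simps)
qed

lemma inv_comp:
  assumes w: "w permutes {1..N}"
  shows "2 * real (inv_stat N (cmp N w)) = real N * (real N - 1) - 2 * real (inv_stat N w)"
proof -
  have eq: "Inv N (cmp N w) = Pairs N - Inv N w"
  proof (intro equalityI subsetI)
    fix x assume "x \<in> Inv N (cmp N w)"
    then obtain i j where "x = (i,j)" "1 \<le> i" "i < j" "j \<le> N" "cmp N w i > cmp N w j"
      by (auto simp: Inv_def)
    then show "x \<in> Pairs N - Inv N w"
      using perm_range[OF w, of i] perm_range[OF w, of j] by (auto simp: Inv_def Pairs_def cmp_def)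
  next
    fix x assume "x \<in> Pairs N - Inv N w"
    then obtain i j where ij: "x = (i,j)" "1 \<le> i" "i < j" "j \<le> N" "\<not> w i > w j"
      by (auto simp: Inv_def Pairs_def)
    have "w i < w j" using ij perm_inj[OF w, of i j] by (cases "w i = w j") auto
    moreover have "w j \<le> N" using perm_range[OF w, of j] ij by simp
    ultimately have "Suc N - w j < Suc N - w i" by linarith
    then show "x \<in> Inv N (cmp N w)"
      using ij by (auto simp: Inv_def cmp_def)
  qed
  have sub: "Inv N w \<subseteq> Pairs N" by (auto simp: Inv_def Pairs_def)
  have "card (Inv N (cmp N w)) = card (Pairs N) - card (Inv N w)"
    unfolding eq by (rule card_Diff_subset[OF finite_Inv sub])
  moreover have "card (Inv N w) \<le> card (Pairs N)" by (rule card_mono[OF finite_Pairs sub])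
  moreover have "2 * real (card (Pairs N)) = real N * (real N - 1)"
  proof -
    have "real (2 * card (Pairs N)) = real (N * (N - 1))" using card_Pairs[of N] by metis
    then show ?thesis by (cases N) (simp_all add: algebra_simps)
  qed
  ultimately show ?thesis by (simp add: inv_stat_Inv of_nat_diff)
qed

lemma gauss_sum: "2 * (\<Sum>i\<in>{1..n}. real i) = real n * (real n + 1)"
  by (induction n) (auto simp: algebra_simps)

lemma maj_comp:
  assumes w: "w permutes {1..N}"
  shows "2 * real (maj_stat N (cmp N w)) = real N * (real N - 1) - 2 * real (maj_stat N w)"
proof -
  have eq: "DS N (cmp N w) = {1..N-1} - DS N w"
  proof (intro equalityI subsetI)
    fix i assume "i \<in> DS N (cmp N w)"
    then show "i \<in> {1..N-1} - DS N w"
      using cmp_less[OF w, of "i" "Suc i"] by (auto simp: DS_def) linarith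
  next
    fix i assume "i \<in> {1..N-1} - DS N w"
    then show "i \<in> DS N (cmp N w)"
      using cmp_less[OF w, of "i" "Suc i"] perm_inj[OF w, of i "Suc i"]
      by (auto simp: DS_def) (metis Suc_n_not_le_n linorder_neqE_nat not_less_eq_eq diff_Suc_1 le_diff_conv)
  qed
  have sub: "DS N w \<subseteq> {1..N-1}" by (auto simp: DS_def)
  have "real (\<Sum>(DS N (cmp N w))) = (\<Sum>i\<in>{1..N-1}. real i) - (\<Sum>i\<in>DS N w. real i)"
    unfolding eq of_nat_sum by (rule sum_diff[OF _ sub]) simp
  moreover have "2 * (\<Sum>i\<in>{1..N-1}. real i) = real N * (real N - 1)"
    using gauss_sum[of "N - 1"] by (cases N) (auto simp: algebra_simps)
  ultimately show ?thesis by (simp add: maj_stat_DS of_nat_sum algebra_simps)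
qed

lemma card_gt: "s < N \<Longrightarrow> card {i. s < i \<and> i \<le> N - 1} = N - 1 - s"
proof -
  assume "s < N"
  have "{i. s < i \<and> i \<le> N - 1} = {Suc s..N-1}" by auto
  then show ?thesis by simp
qed

lemma bb_comp:
  assumes w: "w permutes {1..N}" and s: "s \<le> N"
  shows "real (bb N s w) + real (bb N s (cmp N w)) = (if s < N then real N + 1 else 0)"
proof -
  let ?D = "DS N w" and ?D' = "DS N (cmp N w)"
  have DD: "?D' = {1..N-1} - ?D"
  proof (intro equalityI subsetI)
    fix i assume "i \<in> ?D'"
    then show "i \<in> {1..N-1} - ?D"
      using cmp_less[OF w, of "i" "Suc i"] by (auto simp: DS_def) linarith
  next
    fix i assume "i \<in> {1..N-1} - ?D"
    then show "i \<in> ?D'"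
      using cmp_less[OF w, of "i" "Suc i"] perm_inj[OF w, of i "Suc i"]
      by (auto simp: DS_def) (metis Suc_n_not_le_n linorder_neqE_nat not_less_eq_eq diff_Suc_1 le_diff_conv)
  qed
  have c: "card {i \<in> ?D. s < i} + card {i \<in> ?D'. s < i} = card {i. s < i \<and> i \<le> N - 1}"
  proof -
    have "{i. s < i \<and> i \<le> N - 1} = {i \<in> ?D. s < i} \<union> {i \<in> ?D'. s < i}"
      unfolding DD by (auto simp: DS_def)
    moreover have "finite {i \<in> ?D. s < i}" "finite {i \<in> ?D'. s < i}" using finite_DS by auto
    moreover have "{i \<in> ?D. s < i} \<inter> {i \<in> ?D'. s < i} = {}" unfolding DD by auto
    ultimately show ?thesis by (simp add: card_Un_disjoint)
  qed
  have le1: "(if s \<in> ?D then s else 0) \<le> (if s < N then Suc s else 0)" by (auto simp: DS_def)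
  have le2: "(if s \<in> ?D' then s else 0) \<le> (if s < N then Suc s else 0)" by (auto simp: DS_def)
  show ?thesis
  proof (cases "s < N")
    case True
    have "(if s \<in> ?D then s else 0) + (if s \<in> ?D' then s else 0) = (if 1 \<le> s then s else 0)"
      using True unfolding DD by (auto simp: DS_def)
    then have X: "real (if s \<in> ?D then s else 0) + real (if s \<in> ?D' then s else 0) = (if 1 \<le> s then real s else 0)"
      by (metis (full_types) of_nat_0 of_nat_add)
    have Y: "real (card {i \<in> ?D. s < i}) + real (card {i \<in> ?D'. s < i}) = real N - 1 - real s"
    proof -
      have "card {i \<in> ?D. s < i} + card {i \<in> ?D'. s < i} = N - 1 - s" using c card_gt[OF True] by simp
      then have "real (card {i \<in> ?D. s < i}) + real (card {i \<in> ?D'. s < i}) = real (N - 1 - s)"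
        by (metis of_nat_add)
      also have "\<dots> = real N - 1 - real s" using True by (simp add: of_nat_diff)
      finally show ?thesis .
    qed
    have bbv: "real (bb N s v) = real (Suc s) + real (card {i \<in> DS N v. s < i}) - real (if s \<in> DS N v then s else 0)" for v
    proof -
      have "(if s \<in> DS N v then s else 0) \<le> Suc s" by auto
      then show ?thesis using True unfolding bb_def by (simp add: of_nat_diff)
    qed
    have X': "real (if s \<in> ?D then s else 0) + real (if s \<in> ?D' then s else 0) = real s"
      using X by (cases "s = 0") auto
    have "real (bb N s w) + real (bb N s (cmp N w)) = real N + 1"
      using X' Y bbv[of w] bbv[of "cmp N w"] by simp
    then show ?thesis using True by simp
  next
    case False
    then have "s = N" using s by simp
    have e: "{i \<in> DS N v. N < i} = {}" for v by (auto simp: DS_def)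
    have n: "N \<notin> DS N v" for v by (auto simp: DS_def)
    have "bb N N v = 0" for v by (simp add: bb_def e n)
    then show ?thesis using \<open>s = N\<close> by simp
  qed
qed

context
  fixes N :: nat and w :: "nat \<Rightarrow> nat"
begin

private abbreviation "D \<equiv> DS N w"
private definition "c s = card {i \<in> DS N w. s < i}"

private lemma D_le: "i \<in> D \<Longrightarrow> 1 \<le> i \<and> i < N" by (auto simp: DS_def)

private lemma bb_D: "s \<in> D \<Longrightarrow> bb N s w = Suc (c s)"
  using D_le[of s] by (auto simp: bb_def c_def)

private lemma bb_nD: "s \<notin> D \<Longrightarrow> s < N \<Longrightarrow> bb N s w = Suc s + c s"
  by (auto simp: bb_def c_def)

private lemma bb_N: "bb N N w = 0"
proof -
  have e: "{i \<in> D. N < i} = {}" by (auto dest: D_le)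
  have n: "N \<notin> D" by (auto dest: D_le)
  show ?thesis unfolding bb_def using n by (simp add: e)
qed

private lemma c_le: "s < N \<Longrightarrow> c s \<le> N - 1 - s"
proof -
  assume "s < N"
  have "{i \<in> D. s < i} \<subseteq> {Suc s..N-1}" by (auto dest: D_le)
  then have "c s \<le> card {Suc s..N-1}" unfolding c_def by (rule card_mono[rotated]) simp
  then show ?thesis by simp
qed

private lemma c_D: "s \<in> D \<Longrightarrow> c s < card D"
proof -
  assume "s \<in> D"
  then have "{i \<in> D. s < i} \<subset> D" by auto
  then show ?thesis unfolding c_def by (rule psubset_card_mono[OF finite_DS])
qed

private lemma c_nD: "s \<notin> D \<Longrightarrow> card D \<le> c s + s"
proof -
  assume s: "s \<notin> D"
  have "D \<subseteq> {i \<in> D. s < i} \<union> {1..<s}" 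
  proof
    fix i assume i: "i \<in> D"
    then have "1 \<le> i" using D_le by blast
    moreover have "i \<noteq> s" using i s by auto
    ultimately show "i \<in> {i \<in> D. s < i} \<union> {1..<s}" using i by auto
  qed
  then have "card D \<le> card ({i \<in> D. s < i} \<union> {1..<s})" by (rule card_mono[rotated]) (simp add: finite_DS)
  also have "\<dots> \<le> c s + card {1..<s}" unfolding c_def by (rule card_Un_le)
  finally show ?thesis by simp
qed

private lemma c_DD: "s < s' \<Longrightarrow> s' \<in> D \<Longrightarrow> c s' < c s"
proof -
  assume a: "s < s'" "s' \<in> D"
  have "{i \<in> D. s' < i} \<subset> {i \<in> D. s < i}" using a by auto
  then show ?thesis unfolding c_def by (rule psubset_card_mono[rotated]) (simp add: finite_DS)
qed

private lemma c_nn: "s < s' \<Longrightarrow> s' \<notin> D \<Longrightarrow> c s + s + 1 \<le> c s' + s'"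
proof -
  assume a: "s < s'" "s' \<notin> D"
  have "{i \<in> D. s < i} \<subseteq> {i \<in> D. s' < i} \<union> {s<..<s'}" using a by (auto simp: not_less order.order_iff_strict)
  then have "c s \<le> card ({i \<in> D. s' < i} \<union> {s<..<s'})" unfolding c_def
    by (rule card_mono[rotated]) (simp add: finite_DS)
  also have "\<dots> \<le> c s' + card {s<..<s'}" unfolding c_def by (rule card_Un_le)
  finally show ?thesis using a by simp
qed

private lemma bb_lt: "s < s' \<Longrightarrow> s' \<le> N \<Longrightarrow> bb N s w \<noteq> bb N s' w"
proof -
  assume a: "s < s'" "s' \<le> N"
  then have sN: "s < N" by simp
  show ?thesis
  proof (cases "s' = N")
    case True
    then show ?thesis using bb_N bb_D[of s] bb_nD[of s] sN by (cases "s \<in> D") auto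
  next
    case False
    then have s'N: "s' < N" using a by simp
    show ?thesis
    proof (cases "s \<in> D"; cases "s' \<in> D")
      assume "s \<in> D" "s' \<in> D" then show ?thesis using bb_D c_DD[OF a(1)] by fastforce
    next
      assume "s \<in> D" "s' \<notin> D" then show ?thesis using bb_D bb_nD[OF _ s'N] c_D[of s] c_nD[of s'] by auto
    next
      assume "s \<notin> D" "s' \<in> D" then show ?thesis using bb_D bb_nD[OF _ sN] c_D[of s'] c_nD[of s] by auto
    next
      assume "s \<notin> D" "s' \<notin> D" then show ?thesis using bb_nD sN s'N c_nn[OF a(1)] by auto
    qed
  qed
qed

lemma bb_inj: "inj_on (\<lambda>s. bb N s w) {..N}"
proof (rule inj_onI)
  fix s s' assume "s \<in> {..N}" "s' \<in> {..N}" "bb N s w = bb N s' w"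
  then show "s = s'" using bb_lt[of s s'] bb_lt[of s' s] by (cases s s' rule: linorder_cases) auto
qed

lemma bb_le: "s \<le> N \<Longrightarrow> bb N s w \<le> N"
proof -
  assume s: "s \<le> N"
  show ?thesis
  proof (cases "s = N")
    case True then show ?thesis using bb_N by simp
  next
    case False
    then have "s < N" using s by simp
    then show ?thesis using c_le[of s] bb_D[of s] bb_nD[of s] by (cases "s \<in> D") auto
  qed
qed

lemma bb_image: "(\<lambda>s. bb N s w) ` {..N} = {..N}"
  by (rule endo_inj_surj) (auto simp: bb_inj bb_le)

lemma sum_bb: "(\<Sum>s\<le>N. g (bb N s w)) = (\<Sum>t\<le>N. g t)"
proof -
  have "(\<Sum>t\<le>N. g t) = (\<Sum>t\<in>(\<lambda>s. bb N s w) ` {..N}. g t)" by (simp add: bb_image)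
  also have "\<dots> = (\<Sum>s\<le>N. g (bb N s w))" by (subst sum.reindex[OF bb_inj]) simp
  finally show ?thesis by simp
qed

end

lemma sum_rev: "(\<Sum>s\<le>N. g (N - s)) = (\<Sum>t\<le>(N::nat). g t)"
  using sum.nat_diff_reindex[of "g" "Suc N"] by (simp add: lessThan_Suc_atMost)

definition I' :: "nat \<Rightarrow> (nat \<Rightarrow> nat) \<Rightarrow> real" where
  "I' N w = real (inv_stat N w) - mean_n N"
definition M' :: "nat \<Rightarrow> (nat \<Rightarrow> nat) \<Rightarrow> real" where
  "M' N w = real (maj_stat N w) - mean_n N"
definition S :: "nat \<Rightarrow> nat \<Rightarrow> nat \<Rightarrow> real" where
  "S N a b = (\<Sum>w\<in>PS N. I' N w ^ a * M' N w ^ b)"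
definition abar :: "nat \<Rightarrow> nat \<Rightarrow> real" where
  "abar N s = real (N - s) - real N / 2"
definition bbar :: "nat \<Rightarrow> nat \<Rightarrow> (nat \<Rightarrow> nat) \<Rightarrow> real" where
  "bbar N s w = real (bb N s w) - real N / 2"
definition A :: "nat \<Rightarrow> nat \<Rightarrow> nat \<Rightarrow> (nat \<Rightarrow> nat) \<Rightarrow> real" where
  "A N p q w = (\<Sum>s\<le>N. abar N s ^ p * bbar N s w ^ q)"

lemma PS_range: "w \<in> PS N \<Longrightarrow> 1 \<le> i \<Longrightarrow> i \<le> N \<Longrightarrow> w i \<le> N"
proof -
  assume "w \<in> PS N" "1 \<le> i" "i \<le> N"
  moreover from this(1) have "w permutes {1..N}" by (simp add: PS_def)
  ultimately show ?thesis using perm_range by blast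
qed

lemma mean_Suc: "mean_n (Suc N) = mean_n N + real N / 2"
  by (simp add: mean_n_def field_simps)

lemma I'_ins: "w \<in> PS N \<Longrightarrow> s \<le> N \<Longrightarrow> I' (Suc N) (ins N s w) = I' N w + abar N s"
  unfolding I'_def abar_def using inv_ins[of N w s] PS_range[of w N]
  by (simp add: mean_Suc of_nat_diff)

lemma M'_ins: "w \<in> PS N \<Longrightarrow> s \<le> N \<Longrightarrow> M' (Suc N) (ins N s w) = M' N w + bbar N s w"
  unfolding M'_def bbar_def using maj_ins[of N w s] PS_range[of w N]
  by (simp add: mean_Suc)

lemma sum_swap3: "(\<Sum>s\<in>Z. \<Sum>p\<in>X. \<Sum>q\<in>Y. f s p q) = (\<Sum>p\<in>X. \<Sum>q\<in>Y. \<Sum>s\<in>Z. f s p q)"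
proof -
  have "(\<Sum>s\<in>Z. \<Sum>p\<in>X. \<Sum>q\<in>Y. f s p q) = (\<Sum>p\<in>X. \<Sum>s\<in>Z. \<Sum>q\<in>Y. f s p q)" by (rule sum.swap)
  also have "\<dots> = (\<Sum>p\<in>X. \<Sum>q\<in>Y. \<Sum>s\<in>Z. f s p q)" by (rule sum.cong[OF refl], rule sum.swap)
  finally show ?thesis .
qed

lemma S_Suc: "S (Suc N) a b = (\<Sum>p\<le>a. \<Sum>q\<le>b. real (a choose p) * real (b choose q) *
    (\<Sum>w\<in>PS N. I' N w ^ (a - p) * M' N w ^ (b - q) * A N p q w))"
proof -
  have "S (Suc N) a b = (\<Sum>w\<in>PS N. \<Sum>s\<le>N. (I' N w + abar N s) ^ a * (M' N w + bbar N s w) ^ b)"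
    unfolding S_def sum_PS_Suc by (intro sum.cong refl) (simp add: I'_ins M'_ins)
  also have "\<dots> = (\<Sum>w\<in>PS N. \<Sum>s\<le>N. \<Sum>p\<le>a. \<Sum>q\<le>b. real (a choose p) * real (b choose q) *
      (I' N w ^ (a - p) * M' N w ^ (b - q) * (abar N s ^ p * bbar N s w ^ q)))"
  proof (intro sum.cong refl)
    fix w s
    have "(I' N w + abar N s) ^ a * (M' N w + bbar N s w) ^ b =
      (\<Sum>p\<le>a. real (a choose p) * abar N s ^ p * I' N w ^ (a - p)) *
      (\<Sum>q\<le>b. real (b choose q) * bbar N s w ^ q * M' N w ^ (b - q))"
      by (simp only: add.commute[of "I' N w"] add.commute[of "M' N w"] binomial_ring)
    also have "\<dots> = (\<Sum>p\<le>a. \<Sum>q\<le>b. real (a choose p) * real (b choose q) *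
      (I' N w ^ (a - p) * M' N w ^ (b - q) * (abar N s ^ p * bbar N s w ^ q)))"
      by (simp add: sum_product mult_ac)
    finally show "(I' N w + abar N s) ^ a * (M' N w + bbar N s w) ^ b = \<dots>" .
  qed
  also have "\<dots> = (\<Sum>w\<in>PS N. \<Sum>p\<le>a. \<Sum>q\<le>b. \<Sum>s\<le>N. real (a choose p) * real (b choose q) *
      (I' N w ^ (a - p) * M' N w ^ (b - q) * (abar N s ^ p * bbar N s w ^ q)))"
    by (rule sum.cong[OF refl], rule sum_swap3)
  also have "\<dots> = (\<Sum>p\<le>a. \<Sum>q\<le>b. \<Sum>w\<in>PS N. real (a choose p) * real (b choose q) *
      (I' N w ^ (a - p) * M' N w ^ (b - q) * A N p q w))"
    by (simp add: sum.swap[of _ "PS N"] A_def sum_distrib_left)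
  finally show ?thesis by (simp add: sum_distrib_left)
qed

lemma sum_id_real: "(\<Sum>t\<le>N. real t) = real N * (real N + 1) / 2"
  by (induction N) (auto simp: algebra_simps add_divide_distrib)

lemma sum_sq_real: "(\<Sum>t\<le>N. real t ^ 2) = real N * (real N + 1) * (2 * real N + 1) / 6"
  by (induction N) (auto simp: algebra_simps add_divide_distrib power2_eq_square)

lemma sum_c1: "(\<Sum>t\<le>N. real t - real N / 2) = 0"
  by (simp add: sum_subtractf sum_id_real algebra_simps)

lemma sum_c2: "(\<Sum>t\<le>N. (real t - real N / 2) ^ 2) = (real N + 1) * (real N * (real N + 2) / 12)"
proof -
  have "(\<Sum>t\<le>N. (real t - real N / 2) ^ 2) = (\<Sum>t\<le>N. (real t ^ 2 - real N * real t) + (real N / 2) ^ 2)"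
    by (rule sum.cong[OF refl]) (simp add: power2_diff algebra_simps power2_eq_square)
  also have "\<dots> = (\<Sum>t\<le>N. real t ^ 2) - real N * (\<Sum>t\<le>N. real t) + (real N + 1) * (real N / 2) ^ 2"
    by (simp add: sum.distrib sum_subtractf sum_distrib_left)
  also have "\<dots> = (real N + 1) * (real N * (real N + 2) / 12)"
    unfolding sum_id_real sum_sq_real by (simp add: field_simps power2_eq_square)
  finally show ?thesis .
qed

lemma sum_abar: "(\<Sum>s\<le>N. g (abar N s)) = (\<Sum>t\<le>N. g (real t - real N / 2))"
  unfolding abar_def by (rule sum_rev)

lemma sum_bbar: "(\<Sum>s\<le>N. g (bbar N s w)) = (\<Sum>t\<le>N. g (real t - real N / 2))"
  unfolding bbar_def by (rule sum_bb)

lemma A00: "A N 0 0 w = real N + 1" by (simp add: A_def)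
lemma A10: "A N 1 0 w = 0" by (simp add: A_def sum_abar[of "\<lambda>x. x"] sum_c1)
lemma A01: "A N 0 1 w = 0" by (simp add: A_def sum_bbar[of "\<lambda>x. x"] sum_c1)
lemma A20: "A N 2 0 w = (real N + 1) * (real N * (real N + 2) / 12)"
  by (simp add: A_def sum_abar[of "\<lambda>x. x ^ 2"] sum_c2)
lemma A02: "A N 0 2 w = (real N + 1) * (real N * (real N + 2) / 12)"
  by (simp add: A_def sum_bbar[of "\<lambda>x. x ^ 2"] sum_c2)

lemma abar_bound: "s \<le> N \<Longrightarrow> \<bar>abar N s\<bar> \<le> real N / 2"
  by (auto simp: abar_def of_nat_diff abs_if)

lemma bbar_bound: "s \<le> N \<Longrightarrow> \<bar>bbar N s w\<bar> \<le> real N / 2"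
  using bb_le[of s N w] by (auto simp: bbar_def abs_if)

lemma A_bound: "\<bar>A N p q w\<bar> \<le> (real N + 1) * (real N / 2) ^ (p + q)"
proof -
  have "\<bar>A N p q w\<bar> \<le> (\<Sum>s\<le>N. \<bar>abar N s ^ p * bbar N s w ^ q\<bar>)"
    unfolding A_def by (rule sum_abs)
  also have "\<dots> \<le> (\<Sum>s\<le>N. (real N / 2) ^ (p + q))"
  proof (rule sum_mono)
    fix s assume "s \<in> {..N}"
    then have "\<bar>abar N s\<bar> ^ p \<le> (real N / 2) ^ p" "\<bar>bbar N s w\<bar> ^ q \<le> (real N / 2) ^ q"
      by (auto intro!: power_mono abar_bound bbar_bound)
    then show "\<bar>abar N s ^ p * bbar N s w ^ q\<bar> \<le> (real N / 2) ^ (p + q)"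
      by (simp add: abs_mult power_abs power_add mult_mono zero_le_power)
  qed
  finally show ?thesis by (simp add: algebra_simps)
qed

lemma I'_cmp: "w \<in> PS N \<Longrightarrow> I' N (cmp N w) = - I' N w"
  using inv_comp[of w N] by (simp add: I'_def mean_n_def PS_def field_simps)

lemma M'_cmp: "w \<in> PS N \<Longrightarrow> M' N (cmp N w) = - M' N w"
  using maj_comp[of w N] by (simp add: M'_def mean_n_def PS_def field_simps)

lemma cmp_PS: "w \<in> PS N \<Longrightarrow> cmp N w \<in> PS N"
  using comp_permutes[of w N] by (simp add: PS_def)

lemma S_odd: "odd (a + b) \<Longrightarrow> S N a b = 0"
proof -
  assume o: "odd (a + b)"
  have "S N a b = (\<Sum>w\<in>PS N. I' N (cmp N w) ^ a * M' N (cmp N w) ^ b)"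
    unfolding S_def by (rule sum_PS_comp[symmetric])
  also have "\<dots> = (\<Sum>w\<in>PS N. - (I' N w ^ a * M' N w ^ b))"
  proof (rule sum.cong[OF refl])
    fix w assume "w \<in> PS N"
    then have "I' N (cmp N w) ^ a * M' N (cmp N w) ^ b = (-1) ^ (a + b) * (I' N w ^ a * M' N w ^ b)"
      by (simp add: I'_cmp M'_cmp power_minus' power_add mult_ac)
    then show "I' N (cmp N w) ^ a * M' N (cmp N w) ^ b = - (I' N w ^ a * M' N w ^ b)" using o by simp
  qed
  also have "\<dots> = - S N a b" by (simp add: S_def sum_negf)
  finally show ?thesis by simp
qed

lemma A11_cmp: "w \<in> PS N \<Longrightarrow> A N 1 1 w + A N 1 1 (cmp N w) = real N * (real N + 1) / 2"
proof -
  assume w: "w \<in> PS N"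
  have "A N 1 1 w + A N 1 1 (cmp N w) = (\<Sum>s\<le>N. abar N s * (real (bb N s w) + real (bb N s (cmp N w)) - real N))"
    by (simp add: A_def bbar_def sum.distrib[symmetric] algebra_simps)
  also have "\<dots> = (\<Sum>s\<le>N. abar N s * (1 - (real N + 1) * (if s = N then 1 else 0)))"
  proof (rule sum.cong[OF refl])
    fix s assume "s \<in> {..N}"
    then show "abar N s * (real (bb N s w) + real (bb N s (cmp N w)) - real N) = abar N s * (1 - (real N + 1) * (if s = N then 1 else 0))"
      using bb_comp[of w N s] w by (auto simp: PS_def)
  qed
  also have "\<dots> = (\<Sum>s\<le>N. abar N s - (real N + 1) * (if s = N then abar N s else 0))"
    by (rule sum.cong) (auto simp: algebra_simps)
  also have "\<dots> = (\<Sum>s\<le>N. abar N s) - (real N + 1) * abar N N"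
    by (simp only: sum_subtractf sum_distrib_left[symmetric] sum.delta finite_atMost atMost_iff order_refl if_True)
  also have "\<dots> = real N * (real N + 1) / 2"
    using sum_abar[of "\<lambda>x. x" N] sum_c1[of N] by (simp add: abar_def algebra_simps)
  finally show ?thesis .
qed

lemma sum_A11: "even (i + j) \<Longrightarrow> (\<Sum>w\<in>PS N. I' N w ^ i * M' N w ^ j * A N 1 1 w) = real N * (real N + 1) / 4 * S N i j"
proof -
  assume e: "even (i + j)"
  let ?f = "\<lambda>w. I' N w ^ i * M' N w ^ j"
  have inv: "?f (cmp N w) = ?f w" if "w \<in> PS N" for w
  proof -
    have "?f (cmp N w) = (-1) ^ (i + j) * ?f w"
      using that by (simp add: I'_cmp M'_cmp power_minus' power_add mult_ac)
    then show ?thesis using e by simp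
  qed
  have "(\<Sum>w\<in>PS N. ?f w * A N 1 1 w) = (\<Sum>w\<in>PS N. ?f (cmp N w) * A N 1 1 (cmp N w))"
    by (rule sum_PS_comp[symmetric])
  also have "\<dots> = (\<Sum>w\<in>PS N. ?f w * A N 1 1 (cmp N w))"
    by (rule sum.cong[OF refl]) (simp add: inv)
  finally have "2 * (\<Sum>w\<in>PS N. ?f w * A N 1 1 w) = (\<Sum>w\<in>PS N. ?f w * (A N 1 1 w + A N 1 1 (cmp N w)))"
    by (simp add: sum.distrib algebra_simps)
  also have "\<dots> = (\<Sum>w\<in>PS N. ?f w * (real N * (real N + 1) / 2))"
    by (rule sum.cong[OF refl]) (simp only: A11_cmp)
  also have "\<dots> = (\<Sum>w\<in>PS N. ?f w) * (real N * (real N + 1) / 2)"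
    by (simp add: sum_distrib_right)
  finally have "2 * (\<Sum>w\<in>PS N. ?f w * A N 1 1 w) = S N i j * (real N * (real N + 1) / 2)"
    by (simp add: S_def)
  then show ?thesis by (simp add: field_simps)
qed

definition EE :: "nat \<Rightarrow> nat \<Rightarrow> nat \<Rightarrow> real" where
  "EE N a b = S N a b / fact N"
definition vv :: "nat \<Rightarrow> real" where
  "vv N = real N * (real N + 2) / 12"
definition W :: "nat \<Rightarrow> nat \<Rightarrow> nat \<Rightarrow> nat \<Rightarrow> nat \<Rightarrow> real" where
  "W N a b p q = (\<Sum>w\<in>PS N. I' N w ^ (a - p) * M' N w ^ (b - q) * A N p q w) / fact (Suc N)"
definition BB :: "nat \<Rightarrow> nat \<Rightarrow> nat \<Rightarrow> real" where
  "BB N i j = (\<Sum>w\<in>PS N. \<bar>I' N w\<bar> ^ i * \<bar>M' N w\<bar> ^ j) / fact N"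

lemma sum2_div: "(\<Sum>p\<in>X. \<Sum>q\<in>Y. c p q * g p q) / (F::real) = (\<Sum>p\<in>X. \<Sum>q\<in>Y. c p q * (g p q / F))"
  by (simp add: sum_divide_distrib)

lemma EE_Suc: "EE (Suc N) a b = (\<Sum>p\<le>a. \<Sum>q\<le>b. real (a choose p) * real (b choose q) * W N a b p q)"
  unfolding EE_def S_Suc sum2_div unfolding W_def ..

lemma fact_Suc_real: "(fact (Suc N) :: real) = (real N + 1) * fact N"
  by (simp add: algebra_simps)

lemma W00: "W N a b 0 0 = EE N a b"
proof -
  have "(\<Sum>w\<in>PS N. I' N w ^ (a - 0) * M' N w ^ (b - 0) * A N 0 0 w) = S N a b * (real N + 1)"
    unfolding S_def A00 by (simp add: sum_distrib_right)
  then show ?thesis unfolding W_def EE_def fact_Suc_real by simp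
qed

lemma W10: "W N a b 1 0 = 0" unfolding W_def A10 by simp
lemma W01: "W N a b 0 1 = 0" unfolding W_def A01 by simp

lemma W20: "W N a b 2 0 = vv N * EE N (a - 2) b"
proof -
  have "(\<Sum>w\<in>PS N. I' N w ^ (a - 2) * M' N w ^ (b - 0) * A N 2 0 w) = S N (a - 2) b * ((real N + 1) * vv N)"
    unfolding S_def A20 vv_def by (simp add: sum_distrib_right)
  then show ?thesis unfolding W_def EE_def fact_Suc_real by simp
qed

lemma W02: "W N a b 0 2 = vv N * EE N a (b - 2)"
proof -
  have "(\<Sum>w\<in>PS N. I' N w ^ (a - 0) * M' N w ^ (b - 2) * A N 0 2 w) = S N a (b - 2) * ((real N + 1) * vv N)"
    unfolding S_def A02 vv_def by (simp add: sum_distrib_right)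
  then show ?thesis unfolding W_def EE_def fact_Suc_real by simp
qed

lemma W11: "even (a + b) \<Longrightarrow> 1 \<le> a \<Longrightarrow> 1 \<le> b \<Longrightarrow> W N a b 1 1 = real N / 4 * EE N (a - 1) (b - 1)"
proof -
  assume e: "even (a + b)" "1 \<le> a" "1 \<le> b"
  then have e': "even ((a - 1) + (b - 1))" by simp
  have H: "(\<Sum>w\<in>PS N. I' N w ^ (a - 1) * M' N w ^ (b - 1) * A N 1 1 w) = (real N + 1) * (real N / 4 * S N (a - 1) (b - 1))"
    using sum_A11[OF e', of N] by (simp add: algebra_simps)
  show ?thesis unfolding W_def EE_def fact_Suc_real H by simp
qed

lemma W_bound: "\<bar>W N a b p q\<bar> \<le> (real N / 2) ^ (p + q) * BB N (a - p) (b - q)"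
proof -
  have "\<bar>\<Sum>w\<in>PS N. I' N w ^ (a - p) * M' N w ^ (b - q) * A N p q w\<bar> \<le>
      (\<Sum>w\<in>PS N. \<bar>I' N w\<bar> ^ (a - p) * \<bar>M' N w\<bar> ^ (b - q) * ((real N + 1) * (real N / 2) ^ (p + q)))"
  proof (rule order.trans[OF sum_abs], rule sum_mono)
    fix w
    show "\<bar>I' N w ^ (a - p) * M' N w ^ (b - q) * A N p q w\<bar> \<le> \<bar>I' N w\<bar> ^ (a - p) * \<bar>M' N w\<bar> ^ (b - q) * ((real N + 1) * (real N / 2) ^ (p + q))"
      by (simp add: abs_mult power_abs A_bound mult_left_mono)
  qed
  also have "\<dots> = (real N + 1) * (real N / 2) ^ (p + q) * (\<Sum>w\<in>PS N. \<bar>I' N w\<bar> ^ (a - p) * \<bar>M' N w\<bar> ^ (b - q))"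
    by (simp add: sum_distrib_left sum_distrib_right mult_ac)
  finally have H: "\<bar>\<Sum>w\<in>PS N. I' N w ^ (a - p) * M' N w ^ (b - q) * A N p q w\<bar> \<le> (real N + 1) * (real N / 2) ^ (p + q) * (\<Sum>w\<in>PS N. \<bar>I' N w\<bar> ^ (a - p) * \<bar>M' N w\<bar> ^ (b - q))" .
  have F: "(0::real) < (real N + 1) * fact N" by simp
  have "\<bar>W N a b p q\<bar> = \<bar>\<Sum>w\<in>PS N. I' N w ^ (a - p) * M' N w ^ (b - q) * A N p q w\<bar> / ((real N + 1) * fact N)"
    unfolding W_def fact_Suc_real abs_divide using F by simp
  also have "\<dots> \<le> (real N + 1) * (real N / 2) ^ (p + q) * (\<Sum>w\<in>PS N. \<bar>I' N w\<bar> ^ (a - p) * \<bar>M' N w\<bar> ^ (b - q)) / ((real N + 1) * fact N)"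
    by (rule divide_right_mono[OF H]) (use F in simp)
  also have "\<dots> = (real N / 2) ^ (p + q) * BB N (a - p) (b - q)"
    unfolding BB_def by simp
  finally show ?thesis .
qed

lemma pow_bound:
  fixes x y \<sigma> :: real
  assumes s: "\<sigma> > 0" and ij: "i + j \<le> m" and m: "even m"
  shows "\<bar>x\<bar> ^ i * \<bar>y\<bar> ^ j \<le> \<sigma> ^ (i + j) * (1 + (x / \<sigma>) ^ m + (y / \<sigma>) ^ m)"
proof -
  define X where "X = \<bar>x\<bar> / \<sigma>"
  define Y where "Y = \<bar>y\<bar> / \<sigma>"
  define Mx where "Mx = max X Y"
  have X0: "X \<ge> 0" "Y \<ge> 0" using s by (auto simp: X_def Y_def)
  have "(x / \<sigma>) ^ m = \<bar>x / \<sigma>\<bar> ^ m" "(y / \<sigma>) ^ m = \<bar>y / \<sigma>\<bar> ^ m"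
    using power_even_abs[OF m, symmetric] by blast+
  then have xm: "(x / \<sigma>) ^ m = X ^ m" "(y / \<sigma>) ^ m = Y ^ m"
    using s by (simp_all add: X_def Y_def abs_divide)
  have xX: "\<bar>x\<bar> = \<sigma> * X" "\<bar>y\<bar> = \<sigma> * Y" using s by (auto simp: X_def Y_def)
  have "X ^ i * Y ^ j \<le> Mx ^ i * Mx ^ j"
    using X0 by (intro mult_mono power_mono) (auto simp: Mx_def)
  also have "\<dots> = Mx ^ (i + j)" by (simp add: power_add)
  also have "\<dots> \<le> 1 + X ^ m + Y ^ m"
  proof (cases "Mx \<le> 1")
    case True
    then have "Mx ^ (i + j) \<le> 1" using X0 by (intro power_le_one) (auto simp: Mx_def)
    then show ?thesis using X0 by (simp add: add_increasing2)
  next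
    case False
    then have "Mx ^ (i + j) \<le> Mx ^ m" using ij by (intro power_increasing) auto
    also have "\<dots> \<le> X ^ m + Y ^ m" using X0 by (auto simp: Mx_def max_def)
    finally show ?thesis by simp
  qed
  finally have "X ^ i * Y ^ j \<le> 1 + X ^ m + Y ^ m" .
  then have "\<sigma> ^ (i + j) * (X ^ i * Y ^ j) \<le> \<sigma> ^ (i + j) * (1 + X ^ m + Y ^ m)"
    using s by (intro mult_left_mono) auto
  then show ?thesis using xX xm by (simp add: power_mult_distrib power_add mult_ac)
qed

lemma BB_bound:
  assumes s: "\<sigma> > 0" and ij: "i + j \<le> m" and m: "even m"
  shows "BB N i j \<le> \<sigma> ^ (i + j) * (1 + EE N m 0 / \<sigma> ^ m + EE N 0 m / \<sigma> ^ m)"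
proof -
  have "(\<Sum>w\<in>PS N. \<bar>I' N w\<bar> ^ i * \<bar>M' N w\<bar> ^ j) \<le>
      (\<Sum>w\<in>PS N. \<sigma> ^ (i + j) * (1 + (I' N w / \<sigma>) ^ m + (M' N w / \<sigma>) ^ m))"
    by (rule sum_mono) (rule pow_bound[OF s ij m])
  also have "\<dots> = \<sigma> ^ (i + j) * (\<Sum>w\<in>PS N. (1 + (I' N w / \<sigma>) ^ m + (M' N w / \<sigma>) ^ m))"
    by (simp add: sum_distrib_left)
  also have "(\<Sum>w\<in>PS N. (1 + (I' N w / \<sigma>) ^ m + (M' N w / \<sigma>) ^ m)) = fact N + S N m 0 / \<sigma> ^ m + S N 0 m / \<sigma> ^ m"
    by (simp add: sum.distrib S_def power_divide sum_divide_distrib card_PS)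
  finally show ?thesis unfolding BB_def EE_def
    by (simp add: divide_right_mono field_simps)
qed

lemma stolz0:
  fixes z y :: "nat \<Rightarrow> real"
  assumes ymono: "\<And>n. n \<ge> n0 \<Longrightarrow> y n < y (Suc n)"
    and inf: "filterlim y at_top sequentially"
    and lim: "(\<lambda>n. (z (Suc n) - z n) / (y (Suc n) - y n)) \<longlonglongrightarrow> 0"
  shows "(\<lambda>n. z n / y n) \<longlonglongrightarrow> 0"
proof (rule LIMSEQ_I)
  fix r :: real assume r: "r > 0"
  define e where "e = r / 2"
  have e: "e > 0" using r by (simp add: e_def)
  obtain n1 where n1: "\<And>n. n \<ge> n1 \<Longrightarrow> norm ((z (Suc n) - z n) / (y (Suc n) - y n)) < e"
    using LIMSEQ_D[OF lim e] by auto
  obtain n2 where n2: "\<And>n. n \<ge> n2 \<Longrightarrow> y n \<ge> 1"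
    using inf unfolding filterlim_at_top eventually_sequentially by blast
  define m where "m = max n0 (max n1 n2)"
  have step: "\<bar>z (Suc n) - z n\<bar> \<le> e * (y (Suc n) - y n)" if "n \<ge> m" for n
  proof -
    have d: "y (Suc n) - y n > 0" using ymono[of n] that by (simp add: m_def)
    have "\<bar>z (Suc n) - z n\<bar> / (y (Suc n) - y n) < e" using n1[of n] that d by (simp add: m_def abs_divide)
    then show ?thesis using d by (simp add: divide_less_eq)
  qed
  have tel: "\<bar>z (m + k) - z m\<bar> \<le> e * (y (m + k) - y m)" for k
  proof (induction k)
    case 0 then show ?case by simp
  next
    case (Suc k)
    have "\<bar>z (m + Suc k) - z m\<bar> \<le> \<bar>z (Suc (m + k)) - z (m + k)\<bar> + \<bar>z (m + k) - z m\<bar>" by simp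
    also have "\<dots> \<le> e * (y (Suc (m + k)) - y (m + k)) + e * (y (m + k) - y m)"
      using step[of "m + k"] Suc by simp
    finally show ?case by (simp add: algebra_simps)
  qed
  have ym: "y m \<ge> 1" using n2 by (simp add: m_def)
  obtain n3 where n3: "\<And>n. n \<ge> n3 \<Longrightarrow> y n \<ge> (\<bar>z m\<bar> + 1) / e"
    using inf unfolding filterlim_at_top eventually_sequentially by blast
  show "\<exists>no. \<forall>n\<ge>no. norm (z n / y n - 0) < r"
  proof (intro exI allI impI)
    fix n assume n: "n \<ge> max m n3"
    then obtain k where k: "n = m + k" by (metis le_Suc_ex max.boundedE)
    have yn: "y n \<ge> (\<bar>z m\<bar> + 1) / e" using n3 n by simp
    have ypos: "y n > 0"
    proof -
      have "(\<bar>z m\<bar> + 1) / e > 0" using e by (simp add: add_pos_nonneg)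
      then show ?thesis using yn by linarith
    qed
    have t: "\<bar>z n - z m\<bar> \<le> e * (y n - y m)" using tel[of k] k by simp
    have "\<bar>z n\<bar> \<le> \<bar>z m\<bar> + \<bar>z n - z m\<bar>" by (metis abs_triangle_ineq add.commute diff_add_cancel)
    then have "\<bar>z n\<bar> \<le> \<bar>z m\<bar> + e * (y n - y m)" using t by linarith
    also have "\<dots> \<le> \<bar>z m\<bar> + e * y n" using ym e by (simp add: mult_left_mono)
    finally have zn: "\<bar>z n\<bar> \<le> \<bar>z m\<bar> + e * y n" .
    have "\<bar>z m\<bar> < e * y n"
    proof -
      have "\<bar>z m\<bar> + 1 \<le> e * y n" using yn e by (simp add: field_simps)
      then show ?thesis by simp
    qed
    then have "\<bar>z n\<bar> < 2 * e * y n" using zn by simp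
    then have "\<bar>z n\<bar> / y n < 2 * e" using ypos by (simp add: divide_less_eq)
    then show "norm (z n / y n - 0) < r" using ypos by (simp add: e_def abs_divide)
  qed
qed

lemma stolz:
  fixes x y :: "nat \<Rightarrow> real"
  assumes ymono: "\<And>n. n \<ge> n0 \<Longrightarrow> y n < y (Suc n)"
    and inf: "filterlim y at_top sequentially"
    and lim: "(\<lambda>n. (x (Suc n) - x n) / (y (Suc n) - y n)) \<longlonglongrightarrow> L"
  shows "(\<lambda>n. x n / y n) \<longlonglongrightarrow> L"
proof -
  define z where "z n = x n - L * y n" for n
  have ev: "eventually (\<lambda>n. (x (Suc n) - x n) / (y (Suc n) - y n) - L = (z (Suc n) - z n) / (y (Suc n) - y n)) sequentially"
    unfolding eventually_sequentially
  proof (intro exI allI impI)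
    fix n assume "n \<ge> n0"
    then have "y (Suc n) - y n \<noteq> 0" using ymono[of n] by simp
    then show "(x (Suc n) - x n) / (y (Suc n) - y n) - L = (z (Suc n) - z n) / (y (Suc n) - y n)"
      by (simp add: z_def field_simps)
  qed
  have "(\<lambda>n. (x (Suc n) - x n) / (y (Suc n) - y n) - L) \<longlonglongrightarrow> 0"
    using tendsto_diff[OF lim tendsto_const[of L]] by simp
  then have "(\<lambda>n. (z (Suc n) - z n) / (y (Suc n) - y n)) \<longlonglongrightarrow> 0"
    using Lim_transform_eventually[OF _ ev] by blast
  then have "(\<lambda>n. z n / y n) \<longlonglongrightarrow> 0" using stolz0[of n0 y z, OF ymono inf] by blast
  then have "(\<lambda>n. z n / y n + L) \<longlonglongrightarrow> 0 + L" by (intro tendsto_add) auto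
  moreover have "eventually (\<lambda>n. z n / y n + L = x n / y n) sequentially"
  proof -
    have "eventually (\<lambda>n. y n > 0) sequentially"
      using inf by (simp add: filterlim_at_top_dense)
    then show ?thesis by eventually_elim (simp add: z_def field_simps)
  qed
  ultimately show ?thesis using Lim_transform_eventually by fastforce
qed

definition sg2 :: "nat \<Rightarrow> real" where
  "sg2 N = (2 * real N ^ 3 + 3 * real N ^ 2 - 5 * real N) / 72"

lemma sg2_nonneg: "sg2 N \<ge> 0"
proof (cases N)
  case 0 then show ?thesis by (simp add: sg2_def)
next
  case (Suc M)
  have "2 * real N ^ 3 + 3 * real N ^ 2 - 5 * real N = real N * (real N - 1) * (2 * real N + 5)"
    by (simp add: algebra_simps power2_eq_square power3_eq_cube)
  moreover have "real N * (real N - 1) * (2 * real N + 5) \<ge> 0" using Suc by simp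
  ultimately show ?thesis by (simp add: sg2_def)
qed

lemma sigma_sq: "sigma_n N ^ 2 = sg2 N"
  using sg2_nonneg[of N] by (simp add: sigma_n_def sg2_def)

lemma sg2_Suc: "sg2 (Suc N) = sg2 N + vv N"
  by (simp add: sg2_def vv_def algebra_simps power2_eq_square power3_eq_cube field_simps)

lemma vv_pos: "N \<ge> 1 \<Longrightarrow> vv N > 0" by (simp add: vv_def)

lemma sg2_pos: "N \<ge> 2 \<Longrightarrow> sg2 N > 0"
proof -
  assume N: "N \<ge> 2"
  have "2 * real N ^ 3 + 3 * real N ^ 2 - 5 * real N = real N * (real N - 1) * (2 * real N + 5)"
    by (simp add: algebra_simps power2_eq_square power3_eq_cube)
  moreover have "real N * (real N - 1) * (2 * real N + 5) > 0" using N by simp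
  ultimately show ?thesis by (simp add: sg2_def)
qed

lemma sigma_pos: "N \<ge> 2 \<Longrightarrow> sigma_n N > 0"
  using sg2_pos[of N] by (simp add: sigma_n_def sg2_def)

lemma sg2_inf: "filterlim sg2 at_top sequentially"
  unfolding sg2_def by real_asymp

lemma lim_v_sg2: "(\<lambda>N. vv N / sg2 N) \<longlonglongrightarrow> 0"
  unfolding sg2_def vv_def by real_asymp

lemma lim_N_v: "(\<lambda>N. real N / (4 * vv N)) \<longlonglongrightarrow> 0"
  unfolding vv_def by real_asymp

lemma lim_N2_v: "(\<lambda>N. (real N / 2) ^ 2 / vv N) \<longlonglongrightarrow> 3"
proof -
  have "(\<lambda>N. real N ^ 2 / (4 * vv N)) \<longlonglongrightarrow> 3" unfolding vv_def by real_asymp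
  then show ?thesis by (simp add: power_divide)
qed

lemma lim_N_sigma: "(\<lambda>N. (real N / 2) / sigma_n N) \<longlonglongrightarrow> 0"
  unfolding sigma_n_def by real_asymp

fun gm :: "nat \<Rightarrow> real" where
  "gm 0 = 1" | "gm (Suc 0) = 0" | "gm (Suc (Suc n)) = real (Suc n) * gm n"

lemma choose2_real: "real (n choose 2) = real n * (real n - 1) / 2"
proof (induction n)
  case 0 then show ?case by simp
next
  case (Suc n)
  have "Suc n choose 2 = n + (n choose 2)" by (simp add: numeral_2_eq_2)
  then have "real (Suc n choose 2) = real n + real (n choose 2)" by simp
  then show ?case using Suc by (simp add: field_simps)
qed

lemma gm_choose: "real (a choose 2) * gm (a - 2) = real a / 2 * gm a"
proof (cases a rule: gm.cases)
  case (3 n) then show ?thesis by (simp add: choose2_real field_simps)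
qed auto

lemma sig_pow: "sigma_n N ^ (2 * K) = sg2 N ^ K"
  by (simp add: power_mult sigma_sq)

definition ell :: "nat \<Rightarrow> nat \<Rightarrow> nat \<times> nat \<Rightarrow> real" where
  "ell a b x = (if x = (2, 0) then real (a choose 2) * gm (a - 2) * gm b else 0)
     + (if x = (0, 2) then real (b choose 2) * gm a * gm (b - 2) else 0)"

lemma EE00: "EE N 0 0 = 1"
  by (simp add: EE_def S_def card_PS)

context
  fixes K :: nat
  assumes IH: "\<And>a b. a + b = 2 * K \<Longrightarrow> (\<lambda>N. EE N a b / sg2 N ^ K) \<longlonglongrightarrow> gm a * gm b"
begin

lemma ev2: "eventually (\<lambda>N. N \<ge> 2) sequentially"
  by (simp add: eventually_sequentially) (rule exI[of _ 2], simp)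

lemma G_lim: "(\<lambda>N. 1 + EE N (2 * K) 0 / sg2 N ^ K + EE N 0 (2 * K) / sg2 N ^ K) \<longlonglongrightarrow>
    1 + gm (2 * K) * gm 0 + gm 0 * gm (2 * K)"
  by (intro tendsto_add tendsto_const IH) auto

lemma term_big:
  assumes ab: "a + b = 2 * Suc K" and pq: "p \<le> a" "q \<le> b" "p + q \<ge> 3"
  shows "(\<lambda>N. real (a choose p) * real (b choose q) * W N a b p q / (vv N * sg2 N ^ K)) \<longlonglongrightarrow> 0"
proof -
  define t where "t = p + q - 2"
  have t: "p + q = t + 2" "t \<ge> 1" "t \<le> 2 * K" using pq ab by (auto simp: t_def)
  define C where "C = real (a choose p) * real (b choose q)"
  define G where "G N = 1 + EE N (2 * K) 0 / sg2 N ^ K + EE N 0 (2 * K) / sg2 N ^ K" for N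
  define g where "g N = C * G N * ((real N / 2) ^ 2 / vv N) * ((real N / 2) / sigma_n N) ^ t" for N
  have g: "g \<longlonglongrightarrow> C * (1 + gm (2 * K) * gm 0 + gm 0 * gm (2 * K)) * 3 * 0 ^ t"
    unfolding g_def G_def
    by (intro tendsto_mult tendsto_const G_lim lim_N2_v tendsto_power lim_N_sigma)
  moreover have "(0::real) ^ t = 0" using t by (simp add: power_0_left)
  ultimately have g0: "g \<longlonglongrightarrow> 0" by simp
  show ?thesis
  proof (rule Lim_null_comparison[OF _ g0])
    show "eventually (\<lambda>N. norm (real (a choose p) * real (b choose q) * W N a b p q / (vv N * sg2 N ^ K)) \<le> g N) sequentially"
      using ev2
    proof eventually_elim
      case (elim N)
      have sp: "sigma_n N > 0" using sigma_pos elim by simp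
      have vp: "vv N > 0" using vv_pos elim by simp
      have C0: "C \<ge> 0" by (simp add: C_def)
      have ij: "(a - p) + (b - q) \<le> 2 * K" using ab pq by simp
      have ij': "(a - p) + (b - q) = 2 * K - t" using ab pq t by simp
      have BB: "BB N (a - p) (b - q) \<le> sigma_n N ^ (2 * K - t) * G N"
        using BB_bound[OF sp ij, of N] ij' by (simp add: G_def sig_pow)
      have "norm (C * W N a b p q / (vv N * sg2 N ^ K)) = C * \<bar>W N a b p q\<bar> / (vv N * sigma_n N ^ (2 * K))"
        using C0 vp sp sg2_nonneg[of N] by (simp add: abs_mult abs_divide sig_pow)
      also have "\<dots> \<le> C * ((real N / 2) ^ (t + 2) * (sigma_n N ^ (2 * K - t) * G N)) / (vv N * sigma_n N ^ (2 * K))"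
      proof -
        have "\<bar>W N a b p q\<bar> \<le> (real N / 2) ^ (t + 2) * (sigma_n N ^ (2 * K - t) * G N)"
        proof -
          have "\<bar>W N a b p q\<bar> \<le> (real N / 2) ^ (p + q) * BB N (a - p) (b - q)" by (rule W_bound)
          also have "\<dots> \<le> (real N / 2) ^ (p + q) * (sigma_n N ^ (2 * K - t) * G N)"
            by (rule mult_left_mono[OF BB]) simp
          finally show ?thesis using t(1) by simp
        qed
        then show ?thesis using C0 vp sp
          by (intro divide_right_mono mult_left_mono) auto
      qed
      also have "\<dots> = g N"
      proof -
        have "sigma_n N ^ (2 * K) = sigma_n N ^ (2 * K - t) * sigma_n N ^ t"
          using t by (simp flip: power_add)
        then show ?thesis using sp vp
          by (simp add: g_def power_add power_divide field_simps power2_eq_square)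
      qed
      finally show ?case by (simp add: C_def)
    qed
  qed
qed

lemma term_lim:
  assumes ab: "a + b = 2 * Suc K" and pq: "p \<le> a" "q \<le> b" "(p, q) \<noteq> (0, 0)"
  shows "(\<lambda>N. real (a choose p) * real (b choose q) * W N a b p q / (vv N * sg2 N ^ K)) \<longlonglongrightarrow> ell a b (p, q)"
proof -
  have nz: "\<not> (p = 0 \<and> q = 0)" using pq(3) by simp
  have "p + q \<ge> 3 \<or> (p = 1 \<and> q = 0) \<or> (p = 0 \<and> q = 1) \<or> (p = 2 \<and> q = 0) \<or> (p = 0 \<and> q = 2) \<or> (p = 1 \<and> q = 1)"
    using nz by presburger
  then consider "p + q \<ge> 3" | "p = 1" "q = 0" | "p = 0" "q = 1" | "p = 2" "q = 0" | "p = 0" "q = 2" | "p = 1" "q = 1"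
    by blast
  then show ?thesis
  proof cases
    case 1
    moreover have "ell a b (p, q) = 0" using 1 by (auto simp: ell_def)
    ultimately show ?thesis using term_big[OF ab pq(1,2)] by simp
  next
    case 2 then show ?thesis by (simp add: W10[simplified] ell_def)
  next
    case 3 then show ?thesis by (simp add: W01[simplified] ell_def)
  next
    case 4
    have lim: "(\<lambda>N. EE N (a - 2) b / sg2 N ^ K) \<longlonglongrightarrow> gm (a - 2) * gm b"
      using IH[of "a - 2" b] ab pq 4 by simp
    have "(\<lambda>N. real (a choose 2) * (EE N (a - 2) b / sg2 N ^ K)) \<longlonglongrightarrow> real (a choose 2) * (gm (a - 2) * gm b)"
      by (intro tendsto_mult tendsto_const lim)
    moreover have "eventually (\<lambda>N. real (a choose 2) * (EE N (a - 2) b / sg2 N ^ K) =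
        real (a choose p) * real (b choose q) * W N a b p q / (vv N * sg2 N ^ K)) sequentially"
      using ev2
    proof eventually_elim
      case (elim N)
      then have "vv N > 0" by (simp add: vv_pos)
      then show ?case using 4 by (simp add: W20)
    qed
    ultimately have "(\<lambda>N. real (a choose p) * real (b choose q) * W N a b p q / (vv N * sg2 N ^ K)) \<longlonglongrightarrow> real (a choose 2) * (gm (a - 2) * gm b)"
      by (rule Lim_transform_eventually)
    moreover have "ell a b (p, q) = real (a choose 2) * (gm (a - 2) * gm b)" using 4 by (simp add: ell_def)
    ultimately show ?thesis by simp
  next
    case 5
    have lim: "(\<lambda>N. EE N a (b - 2) / sg2 N ^ K) \<longlonglongrightarrow> gm a * gm (b - 2)"
      using IH[of a "b - 2"] ab pq 5 by simp
    have "(\<lambda>N. real (b choose 2) * (EE N a (b - 2) / sg2 N ^ K)) \<longlonglongrightarrow> real (b choose 2) * (gm a * gm (b - 2))"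
      by (intro tendsto_mult tendsto_const lim)
    moreover have "eventually (\<lambda>N. real (b choose 2) * (EE N a (b - 2) / sg2 N ^ K) =
        real (a choose p) * real (b choose q) * W N a b p q / (vv N * sg2 N ^ K)) sequentially"
      using ev2
    proof eventually_elim
      case (elim N)
      then have "vv N > 0" by (simp add: vv_pos)
      then show ?case using 5 by (simp add: W02)
    qed
    ultimately have "(\<lambda>N. real (a choose p) * real (b choose q) * W N a b p q / (vv N * sg2 N ^ K)) \<longlonglongrightarrow> real (b choose 2) * (gm a * gm (b - 2))"
      by (rule Lim_transform_eventually)
    moreover have "ell a b (p, q) = real (b choose 2) * (gm a * gm (b - 2))" using 5 by (simp add: ell_def)
    ultimately show ?thesis by simp
  next
    case 6
    have a1: "1 \<le> a" "1 \<le> b" using pq 6 by auto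
    have e: "even (a + b)" using ab by simp
    have lim: "(\<lambda>N. EE N (a - 1) (b - 1) / sg2 N ^ K) \<longlonglongrightarrow> gm (a - 1) * gm (b - 1)"
      using IH[of "a - 1" "b - 1"] ab a1 by simp
    have "(\<lambda>N. real a * real b * (real N / (4 * vv N)) * (EE N (a - 1) (b - 1) / sg2 N ^ K)) \<longlonglongrightarrow> real a * real b * 0 * (gm (a - 1) * gm (b - 1))"
      by (intro tendsto_mult tendsto_const lim lim_N_v)
    moreover have "eventually (\<lambda>N. real a * real b * (real N / (4 * vv N)) * (EE N (a - 1) (b - 1) / sg2 N ^ K) =
        real (a choose p) * real (b choose q) * W N a b p q / (vv N * sg2 N ^ K)) sequentially"
      using ev2
    proof eventually_elim
      case (elim N)
      then have "vv N > 0" by (simp add: vv_pos)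
      moreover have Weq: "W N a b p q = real N / 4 * EE N (a - 1) (b - 1)" using 6 W11[OF e a1, of N] by simp
      ultimately show ?case using 6 by (simp only: Weq) (simp add: field_simps)
    qed
    ultimately have "(\<lambda>N. real (a choose p) * real (b choose q) * W N a b p q / (vv N * sg2 N ^ K)) \<longlonglongrightarrow> real a * real b * 0 * (gm (a - 1) * gm (b - 1))"
      by (rule Lim_transform_eventually)
    moreover have "ell a b (p, q) = 0" using 6 by (simp add: ell_def)
    ultimately show ?thesis by simp
  qed
qed

end

lemma gm_odd: "gm (2 * r + 1) = 0"
proof (induction r)
  case (Suc r)
  have e: "2 * Suc r + 1 = Suc (Suc (2 * r + 1))" by simp
  have "gm (Suc (2 * r)) = 0" using Suc by simp
  then show ?case unfolding e by simp
qed simp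

lemma gm_even: "gm (2 * r) = fact (2 * r) / (2 ^ r * fact r)"
proof (induction r)
  case 0 then show ?case by simp
next
  case (Suc r)
  have e: "2 * Suc r = Suc (Suc (2 * r))" by simp
  have "gm (2 * Suc r) = real (Suc (2 * r)) * gm (2 * r)"
    unfolding e by (simp only: gm.simps)
  also have "\<dots> = fact (2 * Suc r) / (2 ^ Suc r * fact (Suc r))"
  proof -
    define A where "A = (2 * real r + 1) * fact (2 * r)"
    define B where "B = (2::real) ^ r * fact r"
    define c where "c = 2 * (real r + 1)"
    have f1: "(fact (2 * Suc r) :: real) = c * A"
      unfolding e A_def c_def by (simp add: algebra_simps)
    have f2: "2 ^ Suc r * (fact (Suc r) :: real) = c * B" unfolding B_def c_def by (simp add: algebra_simps)
    have "c \<noteq> 0" by (simp add: c_def)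
    then have "fact (2 * Suc r) / (2 ^ Suc r * fact (Suc r)) = A / (B::real)"
      unfolding f1 f2 by simp
    then show ?thesis unfolding Suc A_def B_def by simp
  qed
  finally show ?case .
qed

lemma step:
  assumes IH: "\<And>a b. a + b = 2 * K \<Longrightarrow> (\<lambda>N. EE N a b / sg2 N ^ K) \<longlonglongrightarrow> gm a * gm b"
    and ab: "a + b = 2 * Suc K"
  shows "(\<lambda>N. EE N a b / sg2 N ^ Suc K) \<longlonglongrightarrow> gm a * gm b"
proof -
  define x where "x N = EE N a b" for N
  define y where "y N = sg2 N ^ Suc K" for N
  define den where "den N = vv N * sg2 N ^ K" for N
  have ev: "eventually (\<lambda>N. N \<ge> 2) sequentially"
    by (simp add: eventually_sequentially) (rule exI[of _ 2], simp)
  have ymono: "y n < y (Suc n)" if "n \<ge> 1" for n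
  proof -
    have "sg2 n < sg2 (Suc n)" using vv_pos[OF that] by (simp add: sg2_Suc)
    then show ?thesis unfolding y_def using sg2_nonneg[of n] by (intro power_strict_mono) auto
  qed
  have yinf: "filterlim y at_top sequentially"
    unfolding y_def by (rule filterlim_pow_at_top[OF _ sg2_inf]) simp
  have Dy: "(\<lambda>N. (y (Suc N) - y N) / den N) \<longlonglongrightarrow> real (Suc K)"
  proof -
    have L: "(\<lambda>N. \<Sum>p<Suc K. (1 + vv N / sg2 N) ^ p) \<longlonglongrightarrow> (\<Sum>p<Suc K. (1 + 0) ^ p)"
      by (intro tendsto_sum tendsto_power tendsto_add tendsto_const lim_v_sg2)
    have E: "eventually (\<lambda>N. (\<Sum>p<Suc K. (1 + vv N / sg2 N) ^ p) = (y (Suc N) - y N) / den N) sequentially"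
      using ev
    proof eventually_elim
      case (elim N)
      have sp: "sg2 N > 0" using sg2_pos elim by simp
      have vp: "vv N > 0" using vv_pos elim by simp
      have "y (Suc N) - y N = (sg2 N + vv N) ^ Suc K - sg2 N ^ Suc K" by (simp add: y_def sg2_Suc)
      also have "\<dots> = vv N * (\<Sum>p<Suc K. (sg2 N + vv N) ^ p * sg2 N ^ (K - p))"
        by (subst diff_power_eq_sum) (simp del: sum.lessThan_Suc)
      finally have "(y (Suc N) - y N) / den N = vv N * (\<Sum>p<Suc K. (sg2 N + vv N) ^ p * sg2 N ^ (K - p)) / (vv N * sg2 N ^ K)"
        by (simp only: den_def)
      also have "\<dots> = (\<Sum>p<Suc K. (sg2 N + vv N) ^ p * sg2 N ^ (K - p)) / sg2 N ^ K"
        using vp by (simp del: sum.lessThan_Suc)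
      also have "\<dots> = (\<Sum>p<Suc K. (sg2 N + vv N) ^ p * sg2 N ^ (K - p) / sg2 N ^ K)"
        by (rule sum_divide_distrib)
      also have "\<dots> = (\<Sum>p<Suc K. (1 + vv N / sg2 N) ^ p)"
      proof (rule sum.cong[OF refl])
        fix p assume "p \<in> {..<Suc K}"
        then have "sg2 N ^ K = sg2 N ^ p * sg2 N ^ (K - p)" by (simp flip: power_add)
        then show "(sg2 N + vv N) ^ p * sg2 N ^ (K - p) / sg2 N ^ K = (1 + vv N / sg2 N) ^ p"
          using sp by (simp add: power_divide field_simps)
      qed
      finally show ?case by simp
    qed
    show ?thesis using Lim_transform_eventually[OF L E] by simp
  qed
  define T where "T N z = real (a choose fst z) * real (b choose snd z) * W N a b (fst z) (snd z)" for N z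
  define Q where "Q = ({..a} \<times> {..b}) - {(0::nat, 0::nat)}"
  have finQ: "finite Q" by (simp add: Q_def)
  have Dx_eq: "x (Suc N) - x N = (\<Sum>z\<in>Q. T N z)" for N
  proof -
    have "x (Suc N) = (\<Sum>z\<in>{..a} \<times> {..b}. T N z)"
      unfolding x_def EE_Suc T_def by (simp add: sum.cartesian_product case_prod_beta)
    also have "\<dots> = T N (0, 0) + (\<Sum>z\<in>Q. T N z)"
      unfolding Q_def by (rule sum.remove) auto
    also have "T N (0, 0) = x N" by (simp add: T_def W00 x_def)
    finally show ?thesis by simp
  qed
  have Dx: "(\<lambda>N. (x (Suc N) - x N) / den N) \<longlonglongrightarrow> real (Suc K) * (gm a * gm b)"
  proof -
    have L: "(\<lambda>N. \<Sum>z\<in>Q. T N z / den N) \<longlonglongrightarrow> (\<Sum>z\<in>Q. ell a b z)"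
    proof (rule tendsto_sum)
      fix z assume z: "z \<in> Q"
      obtain p q where pq: "z = (p, q)" by force
      have "p \<le> a" "q \<le> b" "(p, q) \<noteq> (0, 0)" using z pq by (auto simp: Q_def)
      from term_lim[OF IH ab this] show "(\<lambda>N. T N z / den N) \<longlonglongrightarrow> ell a b z"
        by (simp add: T_def den_def pq)
    qed
    have sumell: "(\<Sum>z\<in>Q. ell a b z) = real (Suc K) * (gm a * gm b)"
    proof -
      have "(\<Sum>z\<in>Q. ell a b z) = (if (2, 0) \<in> Q then real (a choose 2) * gm (a - 2) * gm b else 0)
          + (if (0, 2) \<in> Q then real (b choose 2) * gm a * gm (b - 2) else 0)"
        unfolding ell_def using finQ by (simp add: sum.distrib sum.delta)
      also have "\<dots> = real (a choose 2) * gm (a - 2) * gm b + real (b choose 2) * gm a * gm (b - 2)"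
        by (auto simp: Q_def binomial_eq_0)
      also have "\<dots> = (real a / 2 * gm a) * gm b + gm a * (real b / 2 * gm b)"
        by (simp add: mult_ac) (simp add: gm_choose algebra_simps)
      also have "\<dots> = (real a + real b) / 2 * (gm a * gm b)" by (simp add: field_simps)
      also have "(real a + real b) / 2 = real (Suc K)" using ab by (simp flip: of_nat_add)
      finally show ?thesis .
    qed
    have "(\<lambda>N. \<Sum>z\<in>Q. T N z / den N) = (\<lambda>N. (x (Suc N) - x N) / den N)"
      by (simp add: Dx_eq sum_divide_distrib)
    then show ?thesis using L sumell by simp
  qed
  have R: "(\<lambda>N. ((x (Suc N) - x N) / den N) / ((y (Suc N) - y N) / den N)) \<longlonglongrightarrow> (real (Suc K) * (gm a * gm b)) / real (Suc K)"
    by (rule tendsto_divide[OF Dx Dy]) simp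
  have E: "eventually (\<lambda>N. ((x (Suc N) - x N) / den N) / ((y (Suc N) - y N) / den N) = (x (Suc N) - x N) / (y (Suc N) - y N)) sequentially"
    using ev
  proof eventually_elim
    case (elim N)
    have "den N > 0" using sg2_pos[of N] vv_pos[of N] elim by (simp add: den_def)
    then show ?case by simp
  qed
  have "(\<lambda>N. (x (Suc N) - x N) / (y (Suc N) - y N)) \<longlonglongrightarrow> gm a * gm b"
    using Lim_transform_eventually[OF R E] by simp
  then have "(\<lambda>N. x N / y N) \<longlonglongrightarrow> gm a * gm b"
    using stolz[of 1 y x, OF ymono yinf] by blast
  then show ?thesis by (simp add: x_def y_def)
qed

lemma main_lim: "a + b = 2 * K \<Longrightarrow> (\<lambda>N. EE N a b / sg2 N ^ K) \<longlonglongrightarrow> gm a * gm b"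
proof (induction K arbitrary: a b)
  case 0
  then have "a = 0" "b = 0" by auto
  then show ?case by (simp add: EE00)
next
  case (Suc K)
  show ?case by (rule step[OF Suc.IH Suc.prems])
qed

lemma M_mom_EE: "M_mom a b n = EE n a b / sigma_n n ^ (a + b)"
proof -
  have "M_mom a b n = (\<Sum>p\<in>PS n. I' n p ^ a * M' n p ^ b / sigma_n n ^ (a + b)) / fact n"
    unfolding M_mom_def X_n_def Y_n_def card_PS[unfolded PS_def] PS_def[symmetric]
    by (simp add: I'_def M'_def power_divide power_add card_PS)
  also have "\<dots> = EE n a b / sigma_n n ^ (a + b)"
    by (simp add: EE_def S_def sum_divide_distrib ac_simps)
  finally show ?thesis .
qed

theorem mainTheorem2:
  fixes r s :: nat
  assumes "r \<ge> 1" and "s \<ge> 1"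
  shows "((\<lambda>n. M_mom (2 * r) (2 * s) n) \<longlongrightarrow>
           (fact (2 * r) / (2 ^ r * fact r)) * (fact (2 * s) / (2 ^ s * fact s))) sequentially
       \<and> ((\<lambda>n. M_mom (2 * r - 1) (2 * s - 1) n) \<longlongrightarrow> 0) sequentially
       \<and> (\<forall>n\<ge>2. M_mom (2 * r) (2 * s - 1) n = 0)
       \<and> (\<forall>n\<ge>2. M_mom (2 * r - 1) (2 * s) n = 0)"
proof (intro conjI allI impI)
  have "(\<lambda>n. EE n (2 * r) (2 * s) / sg2 n ^ (r + s)) \<longlonglongrightarrow> gm (2 * r) * gm (2 * s)"
    by (rule main_lim) simp
  then show "((\<lambda>n. M_mom (2 * r) (2 * s) n) \<longlongrightarrow>
           (fact (2 * r) / (2 ^ r * fact r)) * (fact (2 * s) / (2 ^ s * fact s))) sequentially"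
    by (simp add: M_mom_EE gm_even sig_pow[symmetric] distrib_left)
next
  have e: "2 * r - 1 + (2 * s - 1) = 2 * (r + s - 1)" using assms by simp
  have "(\<lambda>n. EE n (2 * r - 1) (2 * s - 1) / sg2 n ^ (r + s - 1)) \<longlonglongrightarrow> gm (2 * r - 1) * gm (2 * s - 1)"
    by (rule main_lim[OF e])
  moreover have "gm (2 * r - 1) = 0"
  proof -
    have e1: "2 * r - 1 = 2 * (r - 1) + 1" using assms by simp
    show ?thesis unfolding e1 by (rule gm_odd)
  qed
  moreover have "(\<lambda>n. M_mom (2 * r - 1) (2 * s - 1) n) = (\<lambda>n. EE n (2 * r - 1) (2 * s - 1) / sg2 n ^ (r + s - 1))"
    by (rule ext) (simp only: M_mom_EE e sig_pow)
  ultimately show "((\<lambda>n. M_mom (2 * r - 1) (2 * s - 1) n) \<longlongrightarrow> 0) sequentially"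
    by simp
next
  fix n :: nat
  have "odd (2 * r + (2 * s - 1))" using assms by simp
  then show "M_mom (2 * r) (2 * s - 1) n = 0" by (simp add: M_mom_EE EE_def S_odd)
next
  fix n :: nat
  have "odd ((2 * r - 1) + 2 * s)" using assms by simp
  then show "M_mom (2 * r - 1) (2 * s) n = 0" by (simp add: M_mom_EE EE_def S_odd)
qed

end
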